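(* Let $f:\mathbb{R}^n\to\mathbb{R}$ be strongly convex with constant $\mu\ge0$, let $\gamma_k>0$, $\delta_k>0$, $s_k>0$ for all $k$, and let $\{x_k\}$ be generated by the random incremental penalty method. Assume there is $M>0$ such that, almost surely, for all $k\ge1$, $\|\tilde\nabla f(x_k)\|\le M$ and $\|v\|\le M$ for every $v\in\partial f(\Pi_X[x_k])$. Then, for arbitrary $\eta\in[0,1]$, almost surely for all $y\in X$ and $k\ge1$, $$\begin{aligned}\mathbb{E}\big[\|x_{k+1}-y\|^2\mid\mathcal{F}_k\big]\le{}&(1-\mu s_k)\|x_k-y\|^2+2s_k(1-\eta)\big(f(y)-f(x_k)\big)+2s_k\eta\big(f(y)-f(\Pi_X[x_k])\big)\\&+\frac{s_k\gamma_k\delta_k}{2\alpha_{\min}}-2s_k\Big(\frac{\gamma_k}{m\beta}-\eta M\Big)\mathrm{dist}(x_k,X)-\eta\mu s_k\,\mathrm{dist}^2(x_k,X)+2s_k^2(M^2+\gamma_k^2).\end{aligned}$$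
   Context: Let $a_1,\dots,a_m\in\mathbb{R}^n$ be nonzero vectors and $b_1,\dots,b_m\in\mathbb{R}$; $X_i=\{x:\langle a_i,x\rangle-b_i\le0\}$, $X=\bigcap_{i=1}^mX_i$ (assumed nonempty), $\alpha_{\min}=\min_i\|a_i\|$; $\Pi_X$ is the Euclidean projection onto $X$. $\beta>0$ is a Hoffman constant: a scalar with $\beta\sum_{i=1}^m\mathrm{dist}(x,X_i)\ge\mathrm{dist}(x,X)$ for all $x$. Strong convexity with constant $\mu\ge0$ means $f(u)\ge f(v)+\langle g,u-v\rangle+\frac{\mu}{2}\|u-v\|^2$ for all $u,v$ and $g\in\partial f(v)$. For $\delta>0$, nonzero $a$ and scalar $b$: $h_\delta(x;a,b)=\frac{\langle a,x\rangle-b}{\|a\|}$ if $\langle a,x\rangle-b>\delta$, $\frac{(\langle a,x\rangle-b+\delta)^2}{4\delta\|a\|}$ if $-\delta\le\langle a,x\rangle-b\le\delta$, $0$ if $\langle a,x\rangle-b<-\delta$; $\nabla h_\delta(x;a,b)=\frac{1}{\|a\|}p'_\delta(\langle a,x\rangle-b)\,a$ with $p'_\delta(s)=1$ for $s>\delta$, $\frac{s+\delta}{2\delta}$ for $|s|\le\delta$, $0$ for $s<-\delta$. Random incremental penalty method: random $x_1$ with $\mathbb{E}\|x_1\|^2<\infty$; for $k\ge1$, $x_{k+1}=x_k-s_k\big[\tilde\nabla f(x_k)+\gamma_k\nabla h_{\delta_k}(x_k;a_{i_k},b_{i_k})\big]$ with $\tilde\nabla f(x_k)\in\partial f(x_k)$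 and $i_k$ uniform on $\{1,\dots,m\}$ independent of $x_1,i_1,\dots,i_{k-1}$. $\mathcal{F}_k$ is the $\sigma$-algebra generated by $x_1,\dots,x_k$. *)

theory Defs
  imports "HOL-Analysis.Analysis" "HOL-Probability.Probability"
begin

definition subdiff :: "('a::real_inner \<Rightarrow> real) \<Rightarrow> 'a \<Rightarrow> 'a set" where
  "subdiff f v = {g. \<forall>u. f u \<ge> f v + inner g (u - v)}"

definition strongly_convex :: "('a::real_inner \<Rightarrow> real) \<Rightarrow> real \<Rightarrow> bool" where
  "strongly_convex f mu \<longleftrightarrow> convex_on UNIV f \<and>
     (\<forall>u v g. g \<in> subdiff f v \<longrightarrow> f u \<ge> f v + inner g (u - v) + mu / 2 * (norm (u - v))\<^sup>2)"

text \<open>Derivative of the smoothed penalty profile.\<close>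
definition pdiff :: "real \<Rightarrow> real \<Rightarrow> real" where
  "pdiff \<delta> s = (if s > \<delta> then 1 else if s < - \<delta> then 0 else (s + \<delta>) / (2 * \<delta>))"

definition h_pen :: "real \<Rightarrow> 'a::real_inner \<Rightarrow> 'a \<Rightarrow> real \<Rightarrow> real" where
  "h_pen \<delta> x a b = (let s = inner a x - b in
     if s > \<delta> then s / norm a
     else if s < - \<delta> then 0
     else (s + \<delta>)\<^sup>2 / (4 * \<delta> * norm a))"

definition grad_h :: "real \<Rightarrow> 'a::real_inner \<Rightarrow> 'a \<Rightarrow> real \<Rightarrow> 'a" where
  "grad_h \<delta> x a b = (pdiff \<delta> (inner a x - b) / norm a) *\<^sub>R a"

definition halfspace :: "'a::real_inner \<Rightarrow> real \<Rightarrow> 'a set" where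
  "halfspace a b = {x. inner a x - b \<le> 0}"

definition nat_filtration ::
  "'b measure \<Rightarrow> (nat \<Rightarrow> 'b \<Rightarrow> 'a::topological_space) \<Rightarrow> nat \<Rightarrow> 'b measure" where
  "nat_filtration M x k = sigma (space M)
     {x j -` A \<inter> space M | j A. 1 \<le> j \<and> j \<le> k \<and> A \<in> sets borel}"

end

theory Submission
  imports Defs
begin

lemma pdiff_props:
  assumes "\<delta> > 0"
  shows "0 \<le> pdiff \<delta> t" "pdiff \<delta> t \<le> 1" "pdiff \<delta> t * t \<ge> max t 0 - \<delta>/4"
proof -
  show "0 \<le> pdiff \<delta> t" "pdiff \<delta> t \<le> 1" using assms by (auto simp: pdiff_def divide_simps)
  show "pdiff \<delta> t * t \<ge> max t 0 - \<delta>/4"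
  proof (cases "t > \<delta>")
    case True then show ?thesis using assms by (auto simp: pdiff_def)
  next
    case F1: False
    show ?thesis
    proof (cases "t < -\<delta>")
      case True then show ?thesis using assms by (auto simp: pdiff_def)
    next
      case False
      have "(t + \<delta>) / (2*\<delta>) * t - (max t 0 - \<delta>/4) = ((t + \<delta>) * t - 2*\<delta>*max t 0 + \<delta>^2/2) / (2*\<delta>)"
        using assms by (simp add: field_simps power2_eq_square)
      also have "\<dots> \<ge> 0"
      proof -
        have "(t + \<delta>) * t - 2*\<delta>*max t 0 + \<delta>^2/2 \<ge> 0"
        proof (cases "t \<ge> 0")
          case True
          have "(t + \<delta>) * t - 2*\<delta>*max t 0 + \<delta>^2/2 = (t - \<delta>/2)^2 + \<delta>^2/4"
            using True by (simp add: power2_eq_square field_simps)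
          then show ?thesis by (metis add_nonneg_nonneg zero_le_power2 zero_le_divide_iff zero_le_numeral)
        next
          case False
          have "(t + \<delta>) * t - 2*\<delta>*max t 0 + \<delta>^2/2 = (t + \<delta>/2)^2 + \<delta>^2/4"
            using False by (simp add: power2_eq_square field_simps)
          then show ?thesis by (metis add_nonneg_nonneg zero_le_power2 zero_le_divide_iff zero_le_numeral)
        qed
        then show ?thesis using assms by simp
      qed
      finally show ?thesis using F1 False assms by (simp add: pdiff_def)
    qed
  qed
qed

lemma infdist_halfspace_le:
  fixes a z :: "'a::real_inner"
  assumes "a \<noteq> 0"
  shows "infdist z (halfspace a b) \<le> max (inner a z - b) 0 / norm a"
proof (cases "inner a z - b \<le> 0")
  case True
  then have "z \<in> halfspace a b" by (simp add: halfspace_def)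
  then show ?thesis by simp
next
  case False
  define t where "t = inner a z - b"
  define w where "w = z - (t / (norm a)^2) *\<^sub>R a"
  have na: "norm a > 0" using assms by simp
  have "inner a w - b = 0" using na
    by (simp add: w_def t_def inner_diff_right power2_norm_eq_inner[symmetric] field_simps)
  then have "w \<in> halfspace a b" by (simp add: halfspace_def)
  then have "infdist z (halfspace a b) \<le> dist z w" by (rule infdist_le)
  also have "dist z w = t / norm a" using False na
    by (simp add: dist_norm w_def t_def power2_eq_square)
  finally show ?thesis using False by (simp add: t_def)
qed

lemma grad_h_norm:
  assumes "\<delta> > 0" "a \<noteq> 0"
  shows "norm (grad_h \<delta> z a b) \<le> 1"
  using pdiff_props[OF assms(1), of "inner a z - b"] assms
  by (simp add: grad_h_def)

lemma grad_h_inner: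
  fixes a z y :: "'a::real_inner"
  assumes "\<delta> > 0" "a \<noteq> 0" "y \<in> halfspace a b"
  shows "inner (grad_h \<delta> z a b) (z - y) \<ge> infdist z (halfspace a b) - \<delta> / (4 * norm a)"
proof -
  define t where "t = inner a z - b"
  have na: "norm a > 0" using assms by simp
  have p0: "pdiff \<delta> t \<ge> 0" and pt: "pdiff \<delta> t * t \<ge> max t 0 - \<delta>/4"
    using pdiff_props[OF assms(1)] by auto
  have ty: "inner a y \<le> b" using assms(3) by (simp add: halfspace_def)
  have "inner (grad_h \<delta> z a b) (z - y) = pdiff \<delta> t / norm a * (inner a z - inner a y)"
    by (simp add: grad_h_def t_def inner_diff_right diff_divide_distrib right_diff_distrib)
  also have "\<dots> \<ge> pdiff \<delta> t / norm a * t"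
    using p0 na ty by (intro mult_left_mono) (auto simp: t_def)
  finally have "inner (grad_h \<delta> z a b) (z - y) \<ge> pdiff \<delta> t * t / norm a" by simp
  moreover have "pdiff \<delta> t * t / norm a \<ge> (max t 0 - \<delta>/4) / norm a"
    using pt na by (simp add: divide_right_mono)
  moreover have "(max t 0 - \<delta>/4) / norm a \<ge> infdist z (halfspace a b) - \<delta> / (4 * norm a)"
    using infdist_halfspace_le[OF assms(2), of z b] na by (simp add: t_def diff_divide_distrib)
  ultimately show ?thesis by linarith
qed


lemma norm_diff_sq: "(norm (u - v))\<^sup>2 = (norm u)\<^sup>2 - 2 * inner u v + (norm (v::'a::real_inner))\<^sup>2"
  by (simp add: power2_norm_eq_inner inner_diff_left inner_diff_right inner_commute)

lemma det_bound:
  fixes f :: "'a::euclidean_space \<Rightarrow> real" and a :: "nat \<Rightarrow> 'a" and z y :: 'a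
  assumes X_def: "X = (\<Inter>i\<in>{1..m}. halfspace (a i) (b i))"
    and al_def: "\<alpha>min = Min ((\<lambda>i. norm (a i)) ` {1..m})"
    and m_pos: "m \<ge> 1"
    and a_nz: "\<forall>i\<in>{1..m}. a i \<noteq> 0"
    and X_ne: "X \<noteq> {}"
    and hb: "\<beta> > 0" "\<beta> * (\<Sum>i=1..m. infdist z (halfspace (a i) (b i))) \<ge> infdist z X"
    and sc: "\<mu> \<ge> 0" "strongly_convex f \<mu>"
    and par: "\<gamma> > 0" "\<delta> > 0" "s > 0"
    and sg: "\<forall>z. g z \<in> subdiff f z"
    and eta: "0 \<le> \<eta>" "\<eta> \<le> 1"
    and yX: "y \<in> X"
    and bd: "norm (g z) \<le> Mb" "\<forall>v\<in>subdiff f (closest_point X z). norm v \<le> Mb"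
  shows "(\<Sum>j=1..m. (norm (z - s *\<^sub>R (g z + \<gamma> *\<^sub>R grad_h \<delta> z (a j) (b j)) - y))\<^sup>2) / real m
      \<le> (1 - \<mu> * s) * (norm (z - y))\<^sup>2
         + 2 * s * (1 - \<eta>) * (f y - f z)
         + 2 * s * \<eta> * (f y - f (closest_point X z))
         + s * \<gamma> * \<delta> / (2 * \<alpha>min)
         - 2 * s * (\<gamma> / (real m * \<beta>) - \<eta> * Mb) * infdist z X
         - \<eta> * \<mu> * s * (infdist z X)\<^sup>2
         + 2 * s\<^sup>2 * (Mb\<^sup>2 + \<gamma>\<^sup>2)"
proof -
  define G where "G = g z"
  define H where "H j = grad_h \<delta> z (a j) (b j)" for j
  define D where "D j = infdist z (halfspace (a j) (b j))" for j
  define p where "p = closest_point X z"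
  define d where "d = infdist z X"
  have clX: "closed X" unfolding X_def halfspace_def by (intro closed_INT ballI) (simp add: closed_halfspace_le)

  have d_eq: "d = norm (z - p)"
    using setdist_closest_point[OF clX X_ne, of z] by (simp add: d_def p_def infdist_eq_setdist dist_norm)
  have fin: "finite ((\<lambda>i. norm (a i)) ` {1..m})" by simp
  have ne: "(\<lambda>i. norm (a i)) ` {1..m} \<noteq> {}" using m_pos by auto
  have al_pos: "\<alpha>min > 0" unfolding al_def using a_nz fin ne by (subst Min_gr_iff) auto
  have al_le: "\<alpha>min \<le> norm (a j)" if "j \<in> {1..m}" for j
    unfolding al_def using that fin by (intro Min_le) auto
  have Mb0: "Mb \<ge> 0" using bd(1) norm_ge_zero order_trans by blast
  have trm: "(norm (z - s *\<^sub>R (G + \<gamma> *\<^sub>R H j) - y))\<^sup>2 \<le>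
      (norm (z - y))\<^sup>2 - 2 * s * inner G (z - y) - 2 * s * \<gamma> * (D j - \<delta> / (4 * \<alpha>min))
      + 2 * s\<^sup>2 * (Mb\<^sup>2 + \<gamma>\<^sup>2)" if j: "j \<in> {1..m}" for j
  proof -
    have aj: "a j \<noteq> 0" using a_nz j by auto
    have Hn: "norm (H j) \<le> 1" unfolding H_def by (rule grad_h_norm[OF par(2) aj])
    have yj: "y \<in> halfspace (a j) (b j)" using yX j X_def by auto
    have Hi: "inner (H j) (z - y) \<ge> D j - \<delta> / (4 * norm (a j))"
      unfolding H_def D_def by (rule grad_h_inner[OF par(2) aj yj])
    have "\<delta> / (4 * norm (a j)) \<le> \<delta> / (4 * \<alpha>min)"
      using al_le[OF j] al_pos par by (intro divide_left_mono) (auto, smt (verit) mult_pos_pos)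
    with Hi have Hi2: "inner (H j) (z - y) \<ge> D j - \<delta> / (4 * \<alpha>min)" by linarith
    have nGH: "norm (G + \<gamma> *\<^sub>R H j) \<le> Mb + \<gamma>"
    proof -
      have "norm (G + \<gamma> *\<^sub>R H j) \<le> norm G + \<gamma> * norm (H j)" using par
        by (metis norm_triangle_ineq norm_scaleR abs_of_pos)
      also have "\<dots> \<le> Mb + \<gamma>" using bd(1) Hn par unfolding G_def
        by (smt (verit) mult_left_le)
      finally show ?thesis .
    qed
    have sq: "(norm (G + \<gamma> *\<^sub>R H j))\<^sup>2 \<le> 2 * (Mb\<^sup>2 + \<gamma>\<^sup>2)"
    proof -
      have "(norm (G + \<gamma> *\<^sub>R H j))\<^sup>2 \<le> (Mb + \<gamma>)\<^sup>2"
        using nGH by (intro power_mono) auto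
      also have "\<dots> \<le> 2 * (Mb\<^sup>2 + \<gamma>\<^sup>2)" by (smt (verit) sum_squares_bound power2_sum)
      finally show ?thesis .
    qed
    have "(norm (z - s *\<^sub>R (G + \<gamma> *\<^sub>R H j) - y))\<^sup>2 = (norm ((z - y) - s *\<^sub>R (G + \<gamma> *\<^sub>R H j)))\<^sup>2"
      by (simp add: algebra_simps)
    also have "\<dots> = (norm (z - y))\<^sup>2 - 2 * s * inner G (z - y) - 2 * s * \<gamma> * inner (H j) (z - y)
        + s\<^sup>2 * (norm (G + \<gamma> *\<^sub>R H j))\<^sup>2"
    proof -
      have e1: "(norm (s *\<^sub>R (G + \<gamma> *\<^sub>R H j)))\<^sup>2 = s\<^sup>2 * (norm (G + \<gamma> *\<^sub>R H j))\<^sup>2"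
        using par by (simp add: power_mult_distrib)
      have e2: "inner (z - y) (s *\<^sub>R (G + \<gamma> *\<^sub>R H j)) = s * inner G (z - y) + s * \<gamma> * inner (H j) (z - y)"
        by (simp add: inner_add_right inner_commute algebra_simps)
      show ?thesis unfolding norm_diff_sq[of "z - y"] e1 e2 by (simp add: algebra_simps)
    qed
    also have "\<dots> \<le> (norm (z - y))\<^sup>2 - 2 * s * inner G (z - y) - 2 * s * \<gamma> * (D j - \<delta> / (4 * \<alpha>min))
      + s\<^sup>2 * (2 * (Mb\<^sup>2 + \<gamma>\<^sup>2))"
      using Hi2 sq par by (intro add_mono diff_mono order_refl mult_left_mono) auto
    finally show ?thesis by (simp add: algebra_simps)
  qed
  define A where "A = (norm (z - y))\<^sup>2 - 2 * s * inner G (z - y) + s * \<gamma> * \<delta> / (2 * \<alpha>min)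
      + 2 * s\<^sup>2 * (Mb\<^sup>2 + \<gamma>\<^sup>2)"
  have term2: "(norm (z - s *\<^sub>R (G + \<gamma> *\<^sub>R H j) - y))\<^sup>2 \<le> A - 2 * s * \<gamma> * D j" if "j \<in> {1..m}" for j
    using trm[OF that] by (simp add: A_def algebra_simps)
  have "(\<Sum>j=1..m. (norm (z - s *\<^sub>R (G + \<gamma> *\<^sub>R H j) - y))\<^sup>2) \<le> (\<Sum>j=1..m. A - 2 * s * \<gamma> * D j)"
    by (intro sum_mono term2)
  also have "\<dots> = real m * A - 2 * s * \<gamma> * (\<Sum>j=1..m. D j)"
    by (simp add: sum_subtractf sum_distrib_left)
  finally have S1: "(\<Sum>j=1..m. (norm (z - s *\<^sub>R (G + \<gamma> *\<^sub>R H j) - y))\<^sup>2) / real m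
      \<le> A - 2 * s * \<gamma> * (\<Sum>j=1..m. D j) / real m"
    using m_pos by (simp add: divide_simps mult.commute)
  have "(\<Sum>j=1..m. D j) \<ge> d / \<beta>" using hb unfolding D_def d_def by (simp add: divide_simps mult.commute)
  then have S2: "2 * s * \<gamma> * (\<Sum>j=1..m. D j) / real m \<ge> 2 * s * \<gamma> * (d / \<beta>) / real m"
    using par m_pos by (intro divide_right_mono mult_left_mono) auto
  have scz: "f y \<ge> f z + inner G (y - z) + \<mu> / 2 * (norm (y - z))\<^sup>2"
    using sc(2) sg unfolding strongly_convex_def G_def by blast
  have scp: "f z \<ge> f p + inner (g p) (z - p) + \<mu> / 2 * (norm (z - p))\<^sup>2"
    using sc(2) sg unfolding strongly_convex_def by blast
  have gp: "norm (g p) \<le> Mb" using bd(2) sg unfolding p_def by blast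
  have "inner (g p) (z - p) \<ge> - (Mb * d)"
  proof -
    have "\<bar>inner (g p) (z - p)\<bar> \<le> norm (g p) * norm (z - p)" by (rule Cauchy_Schwarz_ineq2)
    also have "\<dots> \<le> Mb * d" using gp d_eq by (simp add: mult_right_mono)
    finally show ?thesis by linarith
  qed
  with scp d_eq have fp: "f p - f z \<le> Mb * d - \<mu> / 2 * d\<^sup>2" by simp
  have nyz: "norm (y - z) = norm (z - y)" by (rule norm_minus_commute)
  have iG: "inner G (z - y) = - inner G (y - z)" by (simp add: inner_diff_right)
  have key1: "- 2 * s * inner G (z - y) \<le> 2 * s * (f y - f z) - s * \<mu> * (norm (z - y))\<^sup>2"
  proof -
    have "s * (inner G (y - z) + \<mu> / 2 * (norm (y - z))\<^sup>2) \<le> s * (f y - f z)"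
      using scz par by (intro mult_left_mono) auto
    then show ?thesis using nyz iG by (simp add: algebra_simps)
  qed
  have key2: "2 * s * \<eta> * (f p - f z) \<le> 2 * s * \<eta> * (Mb * d - \<mu> / 2 * d\<^sup>2)"
    using fp par eta by (intro mult_left_mono) auto
  have "(\<Sum>j=1..m. (norm (z - s *\<^sub>R (G + \<gamma> *\<^sub>R H j) - y))\<^sup>2) / real m
      \<le> (norm (z - y))\<^sup>2 + 2 * s * (f y - f z) - s * \<mu> * (norm (z - y))\<^sup>2 + s * \<gamma> * \<delta> / (2 * \<alpha>min)
      + 2 * s\<^sup>2 * (Mb\<^sup>2 + \<gamma>\<^sup>2) - 2 * s * \<gamma> * (d / \<beta>) / real m"
    using S1 S2 key1 unfolding A_def by linarith
  also have "\<dots> \<le> (1 - \<mu> * s) * (norm (z - y))\<^sup>2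
         + 2 * s * (1 - \<eta>) * (f y - f z)
         + 2 * s * \<eta> * (f y - f p)
         + s * \<gamma> * \<delta> / (2 * \<alpha>min)
         - 2 * s * (\<gamma> / (real m * \<beta>) - \<eta> * Mb) * d
         - \<eta> * \<mu> * s * d\<^sup>2
         + 2 * s\<^sup>2 * (Mb\<^sup>2 + \<gamma>\<^sup>2)"
    using key2 by (simp add: algebra_simps)
  finally show ?thesis unfolding G_def H_def p_def d_def .
qed


lemma grad_h_meas[measurable]: "(\<lambda>z. grad_h d z (a::'a::euclidean_space) c) \<in> borel_measurable borel"
  unfolding grad_h_def pdiff_def by measurable

lemma x_meas:
  fixes x :: "nat \<Rightarrow> 'w \<Rightarrow> 'a::euclidean_space" and I :: "nat \<Rightarrow> 'w \<Rightarrow> nat"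
  assumes sp: "space N = space M"
    and x1: "x 1 \<in> borel_measurable N"
    and Im: "\<And>j. 1 \<le> j \<Longrightarrow> j < k \<Longrightarrow> I j \<in> measurable N (count_space UNIV)"
    and gm: "g \<in> borel_measurable borel"
    and iter: "\<forall>k\<ge>1. \<forall>\<omega>\<in>space M. x (Suc k) \<omega> =
        x k \<omega> - s k *\<^sub>R (g (x k \<omega>) + \<gamma> k *\<^sub>R grad_h (\<delta> k) (x k \<omega>) (a (I k \<omega>)) (b (I k \<omega>)))"
  shows "1 \<le> j \<Longrightarrow> j \<le> k \<Longrightarrow> x j \<in> borel_measurable N"
proof (induction j)
  case 0 then show ?case by simp
next
  case (Suc j)
  show ?case
  proof (cases "j = 0")
    case True then show ?thesis using x1 by simp
  next
    case False
    then have j1: "1 \<le> j" by simp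
    have xj: "x j \<in> borel_measurable N" using Suc j1 by simp
    have Ij: "I j \<in> measurable N (count_space UNIV)" using Im j1 Suc by simp
    have "(\<lambda>\<omega>. (\<lambda>i \<omega>. x j \<omega> - s j *\<^sub>R (g (x j \<omega>) + \<gamma> j *\<^sub>R grad_h (\<delta> j) (x j \<omega>) (a i) (b i))) (I j \<omega>) \<omega>)
        \<in> borel_measurable N"
    proof (rule measurable_compose_countable'[OF _ Ij])
      fix i :: nat
      show "(\<lambda>\<omega>. x j \<omega> - s j *\<^sub>R (g (x j \<omega>) + \<gamma> j *\<^sub>R grad_h (\<delta> j) (x j \<omega>) (a i) (b i))) \<in> borel_measurable N"
        using xj gm by measurable
    qed simp
    then show ?thesis
      by (rule measurable_cong[THEN iffD1, rotated]) (use iter j1 sp in auto)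
  qed
qed

lemma indep_nn:
  fixes h :: "'w \<Rightarrow> ennreal" and J :: "'w \<Rightarrow> nat"
  assumes P: "prob_space M"
    and ind: "prob_space.indep_set M (sigma_sets (space M) {J -` B \<inter> space M | B. True}) (sets MG)"
    and Jm: "J \<in> measurable M (count_space UNIV)"
    and spG: "space MG = space M" and sG: "sets MG \<subseteq> sets M"
    and hm: "h \<in> borel_measurable MG"
  shows "(\<integral>\<^sup>+\<omega>. indicator {\<omega>\<in>space M. J \<omega> = j} \<omega> * h \<omega> \<partial>M)
      = emeasure M {\<omega>\<in>space M. J \<omega> = j} * (\<integral>\<^sup>+\<omega>. h \<omega> \<partial>M)"
proof -
  interpret prob_space M by fact
  define E where "E = {\<omega>\<in>space M. J \<omega> = j}"
  define X0 :: "'w \<Rightarrow> ennreal" where "X0 = indicator E"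
  have E_ev: "E \<in> events" unfolding E_def using Jm by measurable
  have hM: "h \<in> borel_measurable M"
    using hm spG sG by (metis measurable_from_subalg subalgebra_def)
  have X0m: "X0 \<in> borel_measurable M" unfolding X0_def using E_ev by simp
  have S1: "sigma_sets (space M) {X0 -` A \<inter> space M | A. A \<in> sets borel}
      \<subseteq> sigma_sets (space M) {J -` B \<inter> space M | B. True}"
  proof (rule sigma_algebra.sigma_sets_subset[OF sigma_algebra_sigma_sets])
    show "{J -` B \<inter> space M |B. True} \<subseteq> Pow (space M)" by auto
    show "{X0 -` A \<inter> space M |A. A \<in> sets borel} \<subseteq> sigma_sets (space M) {J -` B \<inter> space M |B. True}"
    proof safe
      fix A :: "ennreal set"
      have "X0 -` A \<inter> space M = J -` {i. indicator {j} i \<in> A} \<inter> space M"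
        by (auto simp: X0_def E_def indicator_def)
      then show "X0 -` A \<inter> space M \<in> sigma_sets (space M) {J -` B \<inter> space M |B. True}"
        by (metis (mono_tags, lifting) mem_Collect_eq sigma_sets.Basic)
    qed
  qed
  have S2: "sigma_sets (space M) {h -` A \<inter> space M | A. A \<in> sets borel} \<subseteq> sets MG"
  proof -
    have "sigma_sets (space MG) {h -` A \<inter> space M | A. A \<in> sets borel} \<subseteq> sets MG"
      by (rule sets.sigma_sets_subset) (use hm spG in \<open>auto, metis measurable_sets\<close>)
    then show ?thesis using spG by simp
  qed
  have iv: "indep_var borel X0 borel h"
    unfolding indep_var_eq
  proof (intro conjI)
    show "random_variable borel X0" using X0m by simp
    show "random_variable borel h" using hM by simp
    show "indep_set (sigma_sets (space M) {X0 -` A \<inter> space M |A. A \<in> sets borel})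
        (sigma_sets (space M) {h -` A \<inter> space M |A. A \<in> sets borel})"
      using ind S1 S2 unfolding indep_sets2_eq by blast
  qed
  have "(\<integral>\<^sup>+\<omega>. (\<Prod>i\<in>UNIV. case_bool X0 h i \<omega>) \<partial>M) = (\<Prod>i\<in>UNIV. \<integral>\<^sup>+\<omega>. case_bool X0 h i \<omega> \<partial>M)"
  proof (rule indep_vars_nn_integral)
    show "indep_vars (\<lambda>_. borel) (case_bool X0 h) UNIV"
      using iv unfolding indep_var_def
      by (metis (no_types, lifting) bool.case_distrib bool.case_eq_if ext)
  qed auto
  then have "(\<integral>\<^sup>+\<omega>. X0 \<omega> * h \<omega> \<partial>M) = (\<integral>\<^sup>+\<omega>. X0 \<omega> \<partial>M) * (\<integral>\<^sup>+\<omega>. h \<omega> \<partial>M)"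
    by (simp add: UNIV_bool mult.commute)
  also have "(\<integral>\<^sup>+\<omega>. X0 \<omega> \<partial>M) = emeasure M E" unfolding X0_def using E_ev by simp
  finally show ?thesis unfolding X0_def E_def .
qed

theorem lemma15:
  fixes f :: "'a::euclidean_space \<Rightarrow> real"
    and \<mu> :: real
    and m :: nat
    and a :: "nat \<Rightarrow> 'a" and b :: "nat \<Rightarrow> real"
    and \<beta> :: real
    and g :: "'a \<Rightarrow> 'a"
    and s \<gamma> \<delta> :: "nat \<Rightarrow> real"
    and M :: "'w measure"
    and x :: "nat \<Rightarrow> 'w \<Rightarrow> 'a"
    and I :: "nat \<Rightarrow> 'w \<Rightarrow> nat"
    and Mb :: real
  defines "X \<equiv> (\<Inter>i\<in>{1..m}. halfspace (a i) (b i))"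
    and "\<alpha>min \<equiv> Min ((\<lambda>i. norm (a i)) ` {1..m})"
  assumes m_pos: "m \<ge> 1"
    and a_nz: "\<forall>i\<in>{1..m}. a i \<noteq> 0"
    and X_ne: "X \<noteq> {}"
    and hoffman: "\<beta> > 0" "\<forall>z. \<beta> * (\<Sum>i=1..m. infdist z (halfspace (a i) (b i))) \<ge> infdist z X"
    and sc: "\<mu> \<ge> 0" "strongly_convex f \<mu>"
    and params: "\<forall>k. \<gamma> k > 0 \<and> \<delta> k > 0 \<and> s k > 0"
    and subgrad: "\<forall>z. g z \<in> subdiff f z" "g \<in> borel_measurable borel"
    and P: "prob_space M"
    and x1: "x 1 \<in> borel_measurable M" "integrable M (\<lambda>\<omega>. (norm (x 1 \<omega>))\<^sup>2)"
    and I_meas: "\<forall>k\<ge>1. I k \<in> measurable M (count_space UNIV)"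
    and I_range: "\<forall>k\<ge>1. \<forall>\<omega>\<in>space M. I k \<omega> \<in> {1..m}"
    and I_unif: "\<forall>k\<ge>1. \<forall>j\<in>{1..m}. measure M {\<omega>\<in>space M. I k \<omega> = j} = 1 / real m"
    and I_indep: "\<forall>k\<ge>1. prob_space.indep_set M
        (sigma_sets (space M) {I k -` B \<inter> space M | B. True})
        (sigma_sets (space M)
           ({x 1 -` A \<inter> space M | A. A \<in> sets borel} \<union>
            {I j -` B \<inter> space M | j B. 1 \<le> j \<and> j < k}))"
    and iter: "\<forall>k\<ge>1. \<forall>\<omega>\<in>space M. x (Suc k) \<omega> =
        x k \<omega> - s k *\<^sub>R (g (x k \<omega>) + \<gamma> k *\<^sub>R grad_h (\<delta> k) (x k \<omega>) (a (I k \<omega>)) (b (I k \<omega>)))"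
    and Mb_pos: "Mb > 0"
    and bounded: "AE \<omega> in M. \<forall>k\<ge>1. norm (g (x k \<omega>)) \<le> Mb \<and>
        (\<forall>v\<in>subdiff f (closest_point X (x k \<omega>)). norm v \<le> Mb)"
  shows "\<forall>\<eta>\<in>{0..1::real}. \<forall>y\<in>X. \<forall>k\<ge>1. AE \<omega> in M.
      real_cond_exp M (nat_filtration M x k) (\<lambda>\<omega>. (norm (x (Suc k) \<omega> - y))\<^sup>2) \<omega>
      \<le> (1 - \<mu> * s k) * (norm (x k \<omega> - y))\<^sup>2
         + 2 * s k * (1 - \<eta>) * (f y - f (x k \<omega>))
         + 2 * s k * \<eta> * (f y - f (closest_point X (x k \<omega>)))
         + s k * \<gamma> k * \<delta> k / (2 * \<alpha>min)
         - 2 * s k * (\<gamma> k / (real m * \<beta>) - \<eta> * Mb) * infdist (x k \<omega>) X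
         - \<eta> * \<mu> * s k * (infdist (x k \<omega>) X)\<^sup>2
         + 2 * (s k)\<^sup>2 * (Mb\<^sup>2 + (\<gamma> k)\<^sup>2)"
proof (intro ballI allI impI)
  fix \<eta> :: real and y :: 'a and k :: nat
  assume eta: "\<eta> \<in> {0..1}" and yX: "y \<in> X" and k1: "1 \<le> k"
  interpret prob_space M using P .
  define F where "F = nat_filtration M x k"
  define genG where "genG = {x 1 -` A \<inter> space M | A. A \<in> sets borel} \<union> {I j -` B \<inter> space M | j B. 1 \<le> j \<and> j < k}"
  define MG where "MG = sigma (space M) genG"
  have genG_sub: "genG \<subseteq> Pow (space M)" by (auto simp: genG_def)
  have spG: "space MG = space M" using genG_sub by (simp add: MG_def)
  have setsG: "sets MG = sigma_sets (space M) genG" using genG_sub by (simp add: MG_def)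
  have x1G: "x 1 \<in> borel_measurable MG"
  proof (rule measurableI)
    fix A :: "'a set" assume "A \<in> sets borel"
    then have "x 1 -` A \<inter> space M \<in> genG" unfolding genG_def by blast
    then show "x 1 -` A \<inter> space MG \<in> sets MG" unfolding setsG spG by (rule sigma_sets.Basic)
  qed simp
  have IG: "I j \<in> measurable MG (count_space UNIV)" if "1 \<le> j" "j < k" for j
  proof (rule measurableI)
    fix B :: "nat set"
    have "I j -` B \<inter> space M \<in> genG" unfolding genG_def using that by blast
    then show "I j -` B \<inter> space MG \<in> sets MG" unfolding setsG spG by (rule sigma_sets.Basic)
  qed simp
  have xG: "x j \<in> borel_measurable MG" if "1 \<le> j" "j \<le> k" for j
    by (rule x_meas[OF spG x1G IG subgrad(2) iter that])
  have xM: "x j \<in> borel_measurable M" if "1 \<le> j" "j \<le> Suc k" for j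
    by (rule x_meas[where N=M and M=M and k="Suc k", OF refl x1(1) _ subgrad(2) iter that]) (use I_meas in auto)
  have genG_M: "genG \<subseteq> sets M"
    unfolding genG_def using x1(1) I_meas by (auto intro: measurable_sets)
  have sG: "sets MG \<subseteq> sets M" unfolding setsG using sets.sigma_sets_subset[OF genG_M] .
  define genF where "genF = {x j -` A \<inter> space M | j A. 1 \<le> j \<and> j \<le> k \<and> A \<in> sets borel}"
  have genF_sub: "genF \<subseteq> Pow (space M)" by (auto simp: genF_def)
  have F_eq: "F = sigma (space M) genF" unfolding F_def nat_filtration_def genF_def ..
  have spF: "space F = space M" using genF_sub by (simp add: F_eq)
  have setsF: "sets F = sigma_sets (space M) genF" using genF_sub by (simp add: F_eq)
  have genF_G: "genF \<subseteq> sets MG"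
  proof
    fix S assume "S \<in> genF"
    then obtain j A where S: "S = x j -` A \<inter> space M" "1 \<le> j" "j \<le> k" "A \<in> sets borel"
      unfolding genF_def by blast
    show "S \<in> sets MG" using measurable_sets[OF xG[OF S(2,3)] S(4)] S(1) spG by simp
  qed
  have sFG: "sets F \<subseteq> sets MG"
    unfolding setsF using sets.sigma_sets_subset[OF genF_G] spG by simp
  have subalg: "subalgebra M F" unfolding subalgebra_def using spF sFG sG by auto
  have sfs: "sigma_finite_subalgebra M F"
    unfolding sigma_finite_subalgebra_def
    using subalg prob_space_imp_sigma_finite[OF prob_space_restr_to_subalg[OF subalg P]] by blast
  have xkF[measurable]: "x k \<in> borel_measurable F"
  proof (rule measurableI)
    fix A :: "'a set" assume "A \<in> sets borel"
    then have "x k -` A \<inter> space M \<in> genF" unfolding genF_def using k1 by blast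
    then show "x k -` A \<inter> space F \<in> sets F" unfolding setsF spF by (rule sigma_sets.Basic)
  qed simp
  define \<psi> where "\<psi> j z = (norm (z - s k *\<^sub>R (g z + \<gamma> k *\<^sub>R grad_h (\<delta> k) z (a j) (b j)) - y))\<^sup>2" for j z
  define Z where "Z \<omega> = (\<Sum>j=1..m. \<psi> j (x k \<omega>)) / real m" for \<omega>
  have gm[measurable]: "g \<in> borel_measurable borel" by (rule subgrad(2))
  have \<psi>m[measurable]: "\<psi> j \<in> borel_measurable borel" for j unfolding \<psi>_def by measurable
  have ZF[measurable]: "Z \<in> borel_measurable F" unfolding Z_def by measurable
  have \<psi>0: "\<psi> j z \<ge> 0" for j z unfolding \<psi>_def by simp
  have Z0: "Z \<omega> \<ge> 0" for \<omega> unfolding Z_def using \<psi>0 by (simp add: sum_nonneg)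
  have Yeq: "ennreal ((norm (x (Suc k) \<omega> - y))\<^sup>2)
      = (\<Sum>j\<in>{1..m}. indicator {\<omega>\<in>space M. I k \<omega> = j} \<omega> * ennreal (\<psi> j (x k \<omega>)))"
    if \<omega>: "\<omega> \<in> space M" for \<omega>
  proof -
    have "(\<Sum>j\<in>{1..m}. indicator {\<omega>\<in>space M. I k \<omega> = j} \<omega> * ennreal (\<psi> j (x k \<omega>)))
        = (\<Sum>j\<in>{1..m}. if I k \<omega> = j then ennreal (\<psi> j (x k \<omega>)) else 0)"
      using \<omega> by (intro sum.cong) (auto simp: indicator_def)
    also have "\<dots> = ennreal (\<psi> (I k \<omega>) (x k \<omega>))"
      using I_range k1 \<omega> by (subst sum.delta') auto
    also have "\<dots> = ennreal ((norm (x (Suc k) \<omega> - y))\<^sup>2)"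
      using iter k1 \<omega> by (simp add: \<psi>_def)
    finally show ?thesis by simp
  qed
  have Zeq: "ennreal (Z \<omega>) = (\<Sum>j\<in>{1..m}. ennreal (1 / real m) * ennreal (\<psi> j (x k \<omega>)))" for \<omega>
  proof -
    have "(\<Sum>j\<in>{1..m}. ennreal (1 / real m) * ennreal (\<psi> j (x k \<omega>)))
        = (\<Sum>j\<in>{1..m}. ennreal (1 / real m * \<psi> j (x k \<omega>)))"
      by (intro sum.cong refl) (subst ennreal_mult[symmetric], auto simp: \<psi>0)
    also have "\<dots> = ennreal (\<Sum>j\<in>{1..m}. 1 / real m * \<psi> j (x k \<omega>))"
      using \<psi>0 by (subst sum_ennreal) auto
    also have "(\<Sum>j\<in>{1..m}. 1 / real m * \<psi> j (x k \<omega>)) = Z \<omega>"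
      unfolding Z_def by (simp add: sum_divide_distrib)
    finally show ?thesis by simp
  qed
  have Em: "emeasure M {\<omega>\<in>space M. I k \<omega> = j} = ennreal (1 / real m)" if "j \<in> {1..m}" for j
  proof -
    have Im: "I k \<in> measurable M (count_space UNIV)" using I_meas k1 by simp
    have "{\<omega>\<in>space M. I k \<omega> = j} \<in> events" using Im by measurable
    then show ?thesis using I_unif k1 that by (simp add: emeasure_eq_measure)
  qed
  have Im[measurable]: "I k \<in> measurable M (count_space UNIV)" using I_meas k1 by simp
  have ind: "indep_set (sigma_sets (space M) {I k -` B \<inter> space M | B. True}) (sets MG)"
    using I_indep k1 unfolding setsG genG_def by simp
  have ch: "AE \<omega> in M. ennreal (Z \<omega>) = nn_cond_exp M F (\<lambda>\<omega>. ennreal ((norm (x (Suc k) \<omega> - y))\<^sup>2)) \<omega>"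
  proof (rule sigma_finite_subalgebra.nn_cond_exp_charact[OF sfs])
    have xSk[measurable]: "x (Suc k) \<in> borel_measurable M" using xM k1 by simp
    show "(\<lambda>\<omega>. ennreal ((norm (x (Suc k) \<omega> - y))\<^sup>2)) \<in> borel_measurable M" by measurable
    show "(\<lambda>\<omega>. ennreal (Z \<omega>)) \<in> borel_measurable F" by measurable
    fix A assume AF: "A \<in> sets F"
    then have AG: "A \<in> sets MG" using sFG by auto
    then have AM[measurable]: "A \<in> sets M" using sG by auto
    have xkG: "x k \<in> borel_measurable MG" using xG k1 by simp
    have xkM[measurable]: "x k \<in> borel_measurable M" using xM k1 by simp
    have hG: "(\<lambda>\<omega>. ennreal (\<psi> j (x k \<omega>)) * indicator A \<omega>) \<in> borel_measurable MG" for j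
      using xkG AG by measurable
    have "(\<integral>\<^sup>+\<omega>\<in>A. ennreal ((norm (x (Suc k) \<omega> - y))\<^sup>2) \<partial>M)
        = (\<integral>\<^sup>+\<omega>. (\<Sum>j\<in>{1..m}. indicator {\<omega>\<in>space M. I k \<omega> = j} \<omega> * (ennreal (\<psi> j (x k \<omega>)) * indicator A \<omega>)) \<partial>M)"
      by (intro nn_integral_cong) (simp add: Yeq sum_distrib_right mult.assoc)
    also have "\<dots> = (\<Sum>j\<in>{1..m}. \<integral>\<^sup>+\<omega>. indicator {\<omega>\<in>space M. I k \<omega> = j} \<omega> * (ennreal (\<psi> j (x k \<omega>)) * indicator A \<omega>) \<partial>M)"
      by (rule nn_integral_sum) measurable
    also have "\<dots> = (\<Sum>j\<in>{1..m}. ennreal (1 / real m) * \<integral>\<^sup>+\<omega>. ennreal (\<psi> j (x k \<omega>)) * indicator A \<omega> \<partial>M)"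
    proof (intro sum.cong refl)
      fix j assume j: "j \<in> {1..m}"
      show "(\<integral>\<^sup>+\<omega>. indicator {\<omega>\<in>space M. I k \<omega> = j} \<omega> * (ennreal (\<psi> j (x k \<omega>)) * indicator A \<omega>) \<partial>M)
          = ennreal (1 / real m) * \<integral>\<^sup>+\<omega>. ennreal (\<psi> j (x k \<omega>)) * indicator A \<omega> \<partial>M"
        using indep_nn[OF P ind Im spG sG hG, of j] Em[OF j] by simp
    qed
    also have "\<dots> = (\<Sum>j\<in>{1..m}. \<integral>\<^sup>+\<omega>. ennreal (1 / real m) * (ennreal (\<psi> j (x k \<omega>)) * indicator A \<omega>) \<partial>M)"
      by (intro sum.cong refl nn_integral_cmult[symmetric]) measurable
    also have "\<dots> = (\<integral>\<^sup>+\<omega>. (\<Sum>j\<in>{1..m}. ennreal (1 / real m) * (ennreal (\<psi> j (x k \<omega>)) * indicator A \<omega>)) \<partial>M)"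
      by (rule nn_integral_sum[symmetric]) measurable
    also have "\<dots> = (\<integral>\<^sup>+\<omega>\<in>A. ennreal (Z \<omega>) \<partial>M)"
      by (intro nn_integral_cong) (simp add: Zeq sum_distrib_right mult.assoc)
    finally show "(\<integral>\<^sup>+\<omega>\<in>A. ennreal ((norm (x (Suc k) \<omega> - y))\<^sup>2) \<partial>M) = (\<integral>\<^sup>+\<omega>\<in>A. ennreal (Z \<omega>) \<partial>M)" .
  qed
  have ch0: "AE \<omega> in M. (\<lambda>_. 0) \<omega> = nn_cond_exp M F (\<lambda>_. 0) \<omega>"
    by (rule sigma_finite_subalgebra.nn_cond_exp_charact[OF sfs]) auto
  have neg0: "(\<lambda>\<omega>. ennreal (- (norm (x (Suc k) \<omega> - y))\<^sup>2)) = (\<lambda>_. 0)"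
    by (intro ext) (simp add: ennreal_neg)
  have ceq: "AE \<omega> in M. real_cond_exp M F (\<lambda>\<omega>. (norm (x (Suc k) \<omega> - y))\<^sup>2) \<omega> = Z \<omega>"
    using ch ch0
  proof eventually_elim
    case (elim \<omega>)
    then show ?case unfolding real_cond_exp_def neg0 using Z0[of \<omega>]
      by (metis diff_zero enn2real_0 enn2real_ennreal)
  qed
  show "AE \<omega> in M.
      real_cond_exp M (nat_filtration M x k) (\<lambda>\<omega>. (norm (x (Suc k) \<omega> - y))\<^sup>2) \<omega>
      \<le> (1 - \<mu> * s k) * (norm (x k \<omega> - y))\<^sup>2
         + 2 * s k * (1 - \<eta>) * (f y - f (x k \<omega>))
         + 2 * s k * \<eta> * (f y - f (closest_point X (x k \<omega>)))
         + s k * \<gamma> k * \<delta> k / (2 * \<alpha>min)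
         - 2 * s k * (\<gamma> k / (real m * \<beta>) - \<eta> * Mb) * infdist (x k \<omega>) X
         - \<eta> * \<mu> * s k * (infdist (x k \<omega>) X)\<^sup>2
         + 2 * (s k)\<^sup>2 * (Mb\<^sup>2 + (\<gamma> k)\<^sup>2)"
    using ceq bounded unfolding F_def[symmetric]
  proof eventually_elim
    case (elim \<omega>)
    have b1: "norm (g (x k \<omega>)) \<le> Mb" "\<forall>v\<in>subdiff f (closest_point X (x k \<omega>)). norm v \<le> Mb"
      using elim(2) k1 by auto
    have "Z \<omega> \<le> (1 - \<mu> * s k) * (norm (x k \<omega> - y))\<^sup>2
         + 2 * s k * (1 - \<eta>) * (f y - f (x k \<omega>))
         + 2 * s k * \<eta> * (f y - f (closest_point X (x k \<omega>)))
         + s k * \<gamma> k * \<delta> k / (2 * \<alpha>min)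
         - 2 * s k * (\<gamma> k / (real m * \<beta>) - \<eta> * Mb) * infdist (x k \<omega>) X
         - \<eta> * \<mu> * s k * (infdist (x k \<omega>) X)\<^sup>2
         + 2 * (s k)\<^sup>2 * (Mb\<^sup>2 + (\<gamma> k)\<^sup>2)"
      unfolding Z_def \<psi>_def
      by (rule det_bound[OF X_def[THEN meta_eq_to_obj_eq] \<alpha>min_def[THEN meta_eq_to_obj_eq] m_pos a_nz X_ne hoffman(1) hoffman(2)[rule_format] sc
            _ _ _ subgrad(1) _ _ yX b1]) (use params eta in auto)
    then show ?case using elim(1) by simp
  qed
qed

end
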